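(* Let \[F_3(x,y)=6(x^2-y^2)(x^2+y^2)^2+3x^5-6x^3y^2-9xy^4-2x^2y^2\in\mathbb{Z}[x,y],\] and let $C_3\subset\mathbb{P}^2$ be the projective closure of the plane affine curve $\{F_3=0\}$, considered over $\mathbb{Q}$. Then $F_3$ is irreducible and $C_3$ is a curve of geometric genus $1$. Moreover $C_3$ is birationally equivalent over $\mathbb{Q}$ to the elliptic curve \[E:\; v^2=u^3-75u+74 .\] An explicit birational map $E\dashrightarrow C_3$ is given by \[(u,v)\mapsto\left(\frac{X}{X^2+Y^2},\,-\frac{Y}{X^2+Y^2}\right),\qquad X=\frac{u-13}{6},\quad Y=\frac{v}{2}\cdot\frac{u-13}{u^2+u-74}.\] In particular $C_3$ is an elliptic curve over $\mathbb{Q}$ (it has the rational point $(-1/2,0)$), with $j$-invariant $j=\frac{62500}{33}=\frac{2^2\cdot 5^6}{3\cdot 11}$.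
   Context: The polynomial $F_3$ arises as follows: for $\phi=\exp\!\big(x/(x^2+y^2)\big)$ one has $\partial_y^3\phi = \frac{xy\,F_3(x,y)}{(x^2+y^2)^6}\,\phi$. The geometric genus of $C_3$ means the genus of its normalization (smooth projective model). *)

theory Defs
  imports Complex_Main "HOL-Computational_Algebra.Polynomial"
begin

text \<open>Bivariate polynomials over Q are represented as Q[x][y] = rat poly poly:
  the outer variable is y, the coefficients are polynomials in x.\<close>

definition polyX :: "rat poly poly" where "polyX = [:[:0, 1:]:]"
definition polyY :: "rat poly poly" where "polyY = [:0, 1:]"

definition F3 :: "rat poly poly" where
  "F3 = 6 * (polyX^2 - polyY^2) * (polyX^2 + polyY^2)^2 + 3 * polyX^5
        - 6 * polyX^3 * polyY^2 - 9 * polyX * polyY^4 - 2 * polyX^2 * polyY^2"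

definition eval2 :: "rat poly poly \<Rightarrow> complex \<Rightarrow> complex \<Rightarrow> complex" where
  "eval2 P x y = poly (map_poly (\<lambda>c. poly (map_poly of_rat c) x) P) y"

definition onE :: "complex \<Rightarrow> complex \<Rightarrow> bool" where
  "onE u v \<longleftrightarrow> v^2 = u^3 - 75 * u + 74"

definition phiX :: "complex \<Rightarrow> complex" where "phiX u = (u - 13) / 6"
definition phiY :: "complex \<Rightarrow> complex \<Rightarrow> complex" where
  "phiY u v = v / 2 * ((u - 13) / (u^2 + u - 74))"

definition phi_defined :: "complex \<Rightarrow> complex \<Rightarrow> bool" where
  "phi_defined u v \<longleftrightarrow> u^2 + u - 74 \<noteq> 0 \<and> (phiX u)^2 + (phiY u v)^2 \<noteq> 0"

definition phi :: "complex \<Rightarrow> complex \<Rightarrow> complex \<times> complex" where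
  "phi u v = (phiX u / ((phiX u)^2 + (phiY u v)^2),
              - phiY u v / ((phiX u)^2 + (phiY u v)^2))"

definition weierstrass_disc :: "rat \<Rightarrow> rat \<Rightarrow> rat" where
  "weierstrass_disc a b = -16 * (4 * a^3 + 27 * b^2)"

definition weierstrass_j :: "rat \<Rightarrow> rat \<Rightarrow> rat" where
  "weierstrass_j a b = 1728 * (4 * a^3) / (4 * a^3 + 27 * b^2)"

end

theory Submission
  imports Defs
begin


lemma map_poly_add_hom:
  assumes "\<And>a b. f (a + b) = f a + f b" "f 0 = 0"
  shows "map_poly f (p + q) = map_poly f p + map_poly f q"
  by (intro poly_eqI) (simp add: coeff_map_poly assms)

lemma map_poly_mult_hom:
  fixes f :: "'a::comm_ring_1 \<Rightarrow> 'b::comm_ring_1"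
  assumes add: "\<And>a b. f (a + b) = f a + f b" and mul: "\<And>a b. f (a * b) = f a * f b" and z: "f 0 = 0"
  shows "map_poly f (p * q) = map_poly f p * map_poly f q"
proof (induction p)
  case 0 then show ?case by simp
next
  case (pCons a p)
  have "map_poly f (pCons a p * q) = map_poly f (smult a q + pCons 0 (p * q))" by simp
  also have "\<dots> = smult (f a) (map_poly f q) + pCons 0 (map_poly f p * map_poly f q)"
    by (simp add: map_poly_add_hom[OF add z] map_poly_smult[of f, OF z mul] map_poly_pCons[of f, OF z] z pCons.IH)
  also have "\<dots> = map_poly f (pCons a p) * map_poly f q"
    by (simp add: map_poly_pCons[of f, OF z])
  finally show ?case .
qed

lemma poly_hom_commute:
  fixes h :: "'a::comm_ring_1 \<Rightarrow> 'b::comm_ring_1"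
  assumes add: "\<And>a b. h (a + b) = h a + h b" and mul: "\<And>a b. h (a * b) = h a * h b" and z: "h 0 = 0"
  shows "h (poly p x) = poly (map_poly h p) (h x)"
proof (induction p)
  case 0 then show ?case by (simp add: z)
next
  case (pCons a p)
  then show ?case by (simp add: map_poly_pCons[of h, OF z] add mul)
qed

definition Xo :: "rat poly poly" where "Xo = [:0, 1:]"
definition Tt :: "rat poly poly" where "Tt = [:[:0, 1:]:]"
definition emb :: "rat poly \<Rightarrow> rat poly poly" where "emb c = map_poly (\<lambda>r. [:r:]) c"
definition LL :: "rat poly poly \<Rightarrow> rat poly poly" where "LL A = poly (map_poly emb A) (Tt * Xo)"
definition ev :: "rat poly poly \<Rightarrow> rat \<Rightarrow> rat \<Rightarrow> rat" where "ev P a b = poly (poly P [:b:]) a"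

lemma emb_add: "emb (a + b) = emb a + emb b"
  unfolding emb_def by (rule map_poly_add_hom) auto
lemma emb_mult: "emb (a * b) = emb a * emb b"
  unfolding emb_def by (rule map_poly_mult_hom) (auto simp: pCons_one[symmetric])
lemma emb_0[simp]: "emb 0 = 0" by (simp add: emb_def)

lemma LL_add: "LL (a + b) = LL a + LL b"
  unfolding LL_def by (simp add: map_poly_add_hom emb_add)
lemma LL_mult: "LL (a * b) = LL a * LL b"
  unfolding LL_def by (simp add: map_poly_mult_hom emb_add emb_mult)
lemma LL_0[simp]: "LL 0 = 0" by (simp add: LL_def)
lemma LL_const: "LL [:c:] = emb c" by (simp add: LL_def map_poly_pCons)
lemma emb_const: "emb [:k:] = [:[:k:]:]" by (simp add: emb_def map_poly_pCons)
lemma emb_1[simp]: "emb 1 = 1" using emb_const[of 1] by (simp add: one_pCons)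
lemma LL_1[simp]: "LL 1 = 1" by (simp add: LL_def map_poly_1)
lemma LL_diff: "LL (a - b) = LL a - LL b"
  using LL_add[of "a - b" b] by simp
lemma LL_power: "LL (a ^ n) = LL a ^ n"
  by (induction n) (simp_all add: LL_mult)
lemma LL_of_nat: "LL (of_nat n) = of_nat n"
  by (induction n) (simp_all add: LL_add)
lemma LL_numeral: "LL (numeral n) = numeral n"
  using LL_of_nat[of "numeral n"] by simp
lemma LL_polyX: "LL polyX = Xo"
  by (simp add: LL_def polyX_def map_poly_pCons emb_def Xo_def)
lemma LL_polyY: "LL polyY = Tt * Xo"
  by (simp add: LL_def polyY_def map_poly_pCons)

lemma ev_LL: "ev (LL A) t x = ev A x (t * x)"
proof -
  define h where "h Q = poly (poly Q [:x:]) t" for Q :: "rat poly poly"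
  have hadd: "h (a + b) = h a + h b" for a b by (simp add: h_def)
  have hmul: "h (a * b) = h a * h b" for a b by (simp add: h_def)
  have hemb: "h (emb c) = poly c x" for c
  proof -
    have "poly (emb c) [:x:] = [:poly c x:]"
      unfolding emb_def
      using poly_hom_commute[of "\<lambda>r. [:r:]" c x] by (simp add: pCons_one[symmetric])
    then show ?thesis by (simp add: h_def)
  qed
  have "ev (LL A) t x = h (LL A)" by (simp add: ev_def h_def)
  also have "\<dots> = poly (map_poly h (map_poly emb A)) (h (Tt * Xo))"
    unfolding LL_def by (rule poly_hom_commute) (auto simp: hadd hmul h_def)
  also have "map_poly h (map_poly emb A) = map_poly (\<lambda>c. poly c x) A"
    by (subst map_poly_map_poly) (auto simp: h_def comp_def hemb[unfolded h_def])
  also have "h (Tt * Xo) = t * x" by (simp add: h_def Tt_def Xo_def)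
  also have "poly (map_poly (\<lambda>c. poly c x) A) (t * x) = ev A x (t * x)"
    unfolding ev_def
    using poly_hom_commute[of "\<lambda>c. poly c x" A "[:t*x:]"] by simp
  finally show ?thesis .
qed

lemma coeff_poly_const: "coeff (poly A [:y:]) j = poly (map_poly (\<lambda>c. coeff c j) A) y"
proof (induction A)
  case 0 then show ?case by simp
next
  case (pCons a p)
  then show ?case by (simp add: map_poly_pCons)
qed

lemma ev_zero_imp:
  assumes "\<And>x y. x \<noteq> 0 \<Longrightarrow> ev A x y = 0"
  shows "A = 0"
proof -
  have "poly A [:y:] = 0" for y
  proof (rule ccontr)
    assume nz: "poly A [:y:] \<noteq> 0"
    have "{x::rat. x \<noteq> 0} \<subseteq> {x. poly (poly A [:y:]) x = 0}"
      using assms by (auto simp: ev_def)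
    moreover have "infinite {x::rat. x \<noteq> 0}"
    proof -
      have "{x::rat. x \<noteq> 0} = UNIV - {0}" by auto
      then show ?thesis by (simp add: infinite_UNIV_char_0)
    qed
    ultimately show False using poly_roots_finite[OF nz] finite_subset by blast
  qed
  then have "map_poly (\<lambda>c. coeff c j) A = 0" for j
    using coeff_poly_const[of A _ j] poly_all_0_iff_0 by (metis coeff_0)
  then have "coeff (coeff A i) j = 0" for i j
    by (metis coeff_0 coeff_map_poly)
  then show "A = 0" by (metis leading_coeff_0_iff poly_eqI coeff_0)
qed

lemma LL_inj0: "LL A = 0 \<Longrightarrow> A = 0"
proof -
  assume h: "LL A = 0"
  show "A = 0"
  proof (rule ev_zero_imp)
    fix x y :: rat assume "x \<noteq> 0"
    have "ev A x ((y / x) * x) = 0" using ev_LL[of A "y/x" x] h by (simp add: ev_def)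
    then show "ev A x y = 0" using \<open>x \<noteq> 0\<close> by simp
  qed
qed

definition RR :: "rat poly poly" where
  "RR = -2 * Tt^2 + (3 - 6 * Tt^2 - 9 * Tt^4) * Xo + (6 + 6 * Tt^2 - 6 * Tt^4 - 6 * Tt^6) * Xo^2"

lemma LL_F3: "LL F3 = Xo^4 * RR"
  unfolding F3_def RR_def
  by (simp add: LL_add LL_diff LL_mult LL_power LL_numeral LL_polyX LL_polyY) algebra

lemma RR_eq: "RR = [:[:0,0,-2:], [:3,0,-6,0,-9:], [:6,0,6,0,-6,0,-6:]:]"
  unfolding RR_def Tt_def Xo_def
  by (simp add: numeral_poly eval_nat_numeral)

lemma ev_mult[simp]: "ev (a * b) x y = ev a x y * ev b x y" by (simp add: ev_def)
lemma ev_add[simp]: "ev (a + b) x y = ev a x y + ev b x y" by (simp add: ev_def)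
lemma ev_diff[simp]: "ev (a - b) x y = ev a x y - ev b x y" by (simp add: ev_def)
lemma ev_power[simp]: "ev (a ^ n) x y = ev a x y ^ n" by (simp add: ev_def poly_power)
lemma ev_numeral[simp]: "ev (numeral n) x y = numeral n" by (simp add: ev_def)
lemma ev_polyX[simp]: "ev polyX x y = x" by (simp add: ev_def polyX_def)
lemma ev_polyY[simp]: "ev polyY x y = y" by (simp add: ev_def polyY_def)
lemma ev_smult[simp]: "ev (smult c P) x y = poly c x * ev P x y" by (simp add: ev_def)
lemma ev_const[simp]: "ev [:[:k:]:] x y = k" by (simp add: ev_def)

lemma ev_F3: "ev F3 x y = 6 * (x^2 - y^2) * (x^2 + y^2)^2 + 3 * x^5
        - 6 * x^3 * y^2 - 9 * x * y^4 - 2 * x^2 * y^2"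
  by (simp add: F3_def)

lemma no_rat_sqrt_12825: "(r::rat)^2 \<noteq> 12825"
proof
  assume h: "r^2 = 12825"
  obtain a b where ab: "r = Fract a b" "b > 0" "coprime a b" by (cases r) auto
  have "r = of_int a / of_int b" using ab by (simp add: Fract_of_int_quotient)
  then have "r * of_int b = of_int a" using ab(2) by simp
  then have "(of_int a)^2 = (12825::rat) * (of_int b)^2" using h by (metis power_mult_distrib)
  then have e: "a^2 = 12825 * b^2"
    by (metis (mono_tags, opaque_lifting) of_int_eq_iff of_int_mult of_int_numeral of_int_power)
  have "b^2 dvd a^2" using e by simp
  moreover have "coprime (b^2) (a^2)" using ab(3) by (simp add: coprime_commute)
  ultimately have "is_unit (b^2)" using coprime_absorb_left by blast
  then have "b = 1" using ab(2) by (simp add: power2_eq_square) (metis zero_less_one_class.zero_le_one int_one_le_iff_zero_less pos_zmult_eq_1_iff)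
  then have e2: "a^2 = 12825" using e by simp
  show False
  proof (cases "\<bar>a\<bar> \<le> 113")
    case True
    then have "\<bar>a\<bar>^2 \<le> 113^2" by (intro power_mono) auto
    then show False using e2 by simp
  next
    case False
    then have "114^2 \<le> \<bar>a\<bar>^2" by (intro power_mono) auto
    then show False using e2 by simp
  qed
qed

lemma ev_F3_01: "ev F3 0 1 = -6" by (simp add: ev_F3)

lemma unit_case:
  assumes F: "F3 = A * B" and pA: "LL A = Xo^m * p'" and pq: "p' * q' = RR" and d: "degree p' = 0"
  shows "is_unit A"
proof -
  obtain c where c: "p' = [:c:]" using d by (metis degree_eq_zeroE)
  have sm: "smult c q' = RR" using pq c by simp
  have "coeff (smult c q') 0 = coeff RR 0" using sm by simp
  then have c0: "c * coeff q' 0 = [:0,0,-2:]" by (simp add: RR_eq)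
  have "coeff (smult c q') 2 = coeff RR 2" using sm by simp
  then have c2: "c * coeff q' 2 = [:6,0,6,0,-6,0,-6:]" by (simp add: RR_eq numeral_2_eq_2)
  have d0: "c dvd [:0,0,-2:]" unfolding c0[symmetric] by (rule dvd_triv_left)
  have d2: "c dvd [:6,0,6,0,-6,0,-6:]" unfolding c2[symmetric] by (rule dvd_triv_left)
  have bez: "[:6,0,6,0,-6,0,-6:] + [:0,0,-2:] * [:3,0,-3,0,-3:] = (6::rat poly)"
    by (simp add: numeral_poly)
  have u6: "is_unit (6::rat poly)"
  proof -
    have "(6::rat poly) * [:1/6:] = 1" by (simp add: numeral_poly one_pCons)
    then show ?thesis by (metis dvdI)
  qed
  have "c dvd [:6,0,6,0,-6,0,-6:] + [:0,0,-2:] * [:3,0,-3,0,-3:]"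
    by (intro dvd_add d2 dvd_mult2 d0)
  then have "c dvd 6" by (simp only: bez)
  then have "c dvd 1" using u6 dvd_unit_imp_unit by blast
  then obtain k where k1: "c = [:k:]" "k dvd 1" using is_unit_poly_iff[of c] by blast
  then have k: "c = [:k:]" "k \<noteq> 0" by auto
  have L1: "LL ([:[:k:]:] * polyX^m) = [:[:k:]:] * Xo^m"
    by (simp only: LL_mult LL_power LL_polyX LL_const emb_const)
  have "LL A = Xo^m * [:[:k:]:]" using pA c k(1) by simp
  then have "LL A = LL ([:[:k:]:] * polyX^m)" unfolding L1 by (simp only: mult.commute)
  then have "LL (A - [:[:k:]:] * polyX^m) = 0" by (simp add: LL_diff)
  then have "A - [:[:k:]:] * polyX^m = 0" by (rule LL_inj0)
  then have A: "A = [:[:k:]:] * polyX^m" by simp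
  show ?thesis
  proof (cases m)
    case 0
    then have "A * [:[:1/k:]:] = 1" using A k by (simp add: one_pCons)
    then show ?thesis by (metis dvdI)
  next
    case (Suc m')
    have "ev F3 0 1 = ev A 0 1 * ev B 0 1" unfolding F by (rule ev_mult)
    also have "ev A 0 1 = 0" using A Suc by simp
    finally show ?thesis using ev_F3_01 by simp
  qed
qed

lemma no_linear_case:
  fixes a0 a1 b0 b1 :: "rat poly"
  assumes "[:a0, a1:] * [:b0, b1:] = RR"
  shows False
proof -
  have "[:a0 * b0, a0 * b1 + a1 * b0, a1 * b1:] = [:[:0,0,-2:], [:3,0,-6,0,-9:], [:6,0,6,0,-6,0,-6:]:]"
    using assms by (simp add: RR_eq algebra_simps)
  then have e: "a0 * b0 = [:0,0,-2:]" "a0 * b1 + a1 * b0 = [:3,0,-6,0,-9:]" "a1 * b1 = [:6,0,6,0,-6,0,-6:]"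
    by auto
  define A0 where "A0 = poly a0 2"
  define A1 where "A1 = poly a1 2"
  define B0 where "B0 = poly b0 2"
  define B1 where "B1 = poly b1 2"
  have f: "A0 * B0 = -8" "A0 * B1 + A1 * B0 = -165" "A1 * B1 = -450"
    using arg_cong[OF e(1), of "\<lambda>p. poly p 2"] arg_cong[OF e(2), of "\<lambda>p. poly p 2"]
      arg_cong[OF e(3), of "\<lambda>p. poly p 2"]
    by (simp_all add: A0_def A1_def B0_def B1_def)
  have "(A0 * B1 - A1 * B0)^2 = (A0 * B1 + A1 * B0)^2 - 4 * (A0 * B0) * (A1 * B1)"
    by (simp add: power2_eq_square algebra_simps)
  also have "\<dots> = 12825" using f by simp
  finally show False using no_rat_sqrt_12825 by blast
qed

lemma deg1_form: "degree p = 1 \<Longrightarrow> p = [:coeff p 0, coeff p 1:]"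
  by (intro poly_eqI) (auto simp: coeff_pCons coeff_eq_0 split: nat.split)

theorem F3_irreducible: "irreducible F3"
proof (rule irreducibleI)
  show "F3 \<noteq> 0"
  proof
    assume "F3 = 0"
    then have "ev F3 0 1 = 0" by (simp add: ev_def)
    then show False using ev_F3_01 by simp
  qed
  show "\<not> is_unit F3"
  proof
    assume "is_unit F3"
    then obtain G where "1 = F3 * G" by (auto elim: dvdE)
    then have "ev 1 0 0 = ev F3 0 0 * ev G 0 0" by (metis ev_mult)
    moreover have "ev F3 0 0 = 0" by (simp add: ev_F3)
    moreover have "ev 1 0 0 = 1" by (simp add: ev_def)
    ultimately show False by simp
  qed
  fix A B assume F: "F3 = A * B"
  define p where "p = LL A"
  define q where "q = LL B"
  have pq: "p * q = Xo^4 * RR" using F by (simp add: p_def q_def LL_mult[symmetric] LL_F3)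
  have RR0: "poly RR 0 = [:0,0,-2:]" by (simp add: RR_eq)
  have RRnz: "RR \<noteq> 0" using RR0 by auto
  have Xonz: "Xo \<noteq> 0" by (simp add: Xo_def)
  have nz: "Xo^4 * RR \<noteq> 0" using RRnz Xonz by simp
  have Xo': "Xo = [:-0, 1:]" by (simp add: Xo_def)
  have pnz: "p \<noteq> 0" and qnz: "q \<noteq> 0" using nz pq by auto
  have "order 0 (p * q) = order 0 p + order 0 q" using pq nz by (intro order_mult) simp
  moreover have "order 0 (Xo^4 * RR) = 4"
  proof -
    have "order 0 (Xo^4 * RR) = order 0 (Xo^4) + order 0 RR" using nz by (intro order_mult)
    also have "order 0 (Xo^4) = 4" unfolding Xo' by (rule order_power_n_n)
    also have "order 0 RR = 0" using RR0 by (intro order_0I) simp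
    finally show ?thesis by simp
  qed
  ultimately have ord: "order 0 p + order 0 q = 4" using pq by simp
  obtain p' where p': "p = Xo ^ order 0 p * p'" using order_decomp[OF pnz, of 0] Xo' by auto
  obtain q' where q': "q = Xo ^ order 0 q * q'" using order_decomp[OF qnz, of 0] Xo' by auto
  have "Xo^4 * (p' * q') = Xo^4 * RR"
  proof -
    have "Xo^4 * (p' * q') = (Xo ^ order 0 p * p') * (Xo ^ order 0 q * q')"
      using ord by (simp add: power_add[symmetric] algebra_simps)
    also have "\<dots> = Xo^4 * RR" using p' q' pq by simp
    finally show ?thesis .
  qed
  then have pq': "p' * q' = RR" using Xonz by simp
  have "degree p' + degree q' = 2"
  proof -
    have "p' \<noteq> 0" "q' \<noteq> 0" using pq' RRnz by auto
    then have "degree (p' * q') = degree p' + degree q'" by (rule degree_mult_eq)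
    then show ?thesis using pq' by (simp add: RR_eq)
  qed
  then consider "degree p' = 0" | "degree q' = 0" | "degree p' = 1 \<and> degree q' = 1" by linarith
  then show "is_unit A \<or> is_unit B"
  proof cases
    case 1 then show ?thesis using unit_case[OF F p'[unfolded p_def] pq'] by blast
  next
    case 2
    have "F3 = B * A" using F by (simp add: mult.commute)
    moreover have "q' * p' = RR" using pq' by (simp add: mult.commute)
    ultimately show ?thesis using unit_case[OF _ q'[unfolded q_def] _ 2] by blast
  next
    case 3
    then have "[:coeff p' 0, coeff p' 1:] * [:coeff q' 0, coeff q' 1:] = RR"
      using deg1_form pq' by metis
    then show ?thesis using no_linear_case by blast
  qed
qed



definition ph :: "rat poly \<Rightarrow> complex \<Rightarrow> complex" where "ph c x = poly (map_poly of_rat c) x"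

lemma ph_add: "ph (a + b) x = ph a x + ph b x"
  unfolding ph_def by (simp add: map_poly_add_hom of_rat_add)
lemma ph_mult: "ph (a * b) x = ph a x * ph b x"
  unfolding ph_def by (simp add: map_poly_mult_hom of_rat_add of_rat_mult)
lemma ph_0: "ph 0 x = 0" by (simp add: ph_def)

lemma eval2_ph: "eval2 P x y = poly (map_poly (\<lambda>c. ph c x) P) y"
  by (simp add: eval2_def ph_def)

lemma eval2_add[simp]: "eval2 (P + Q) x y = eval2 P x y + eval2 Q x y"
  unfolding eval2_ph by (simp add: map_poly_add_hom ph_add ph_0)
lemma eval2_mult[simp]: "eval2 (P * Q) x y = eval2 P x y * eval2 Q x y"
  unfolding eval2_ph by (simp add: map_poly_mult_hom ph_add ph_mult ph_0)
lemma eval2_0[simp]: "eval2 0 x y = 0" by (simp add: eval2_def)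
lemma eval2_minus[simp]: "eval2 (- P) x y = - eval2 P x y"
  using eval2_add[of P "-P" x y] by (simp add: add_eq_0_iff)
lemma eval2_diff[simp]: "eval2 (P - Q) x y = eval2 P x y - eval2 Q x y"
  using eval2_add[of P "-Q" x y] by simp
lemma eval2_const: "eval2 [:[:k:]:] x y = of_rat k"
  by (simp add: eval2_def map_poly_pCons)
lemma eval2_1[simp]: "eval2 1 x y = 1"
  using eval2_const[of 1 x y] by (simp add: one_pCons)
lemma eval2_power[simp]: "eval2 (P ^ n) x y = eval2 P x y ^ n"
  by (induction n) simp_all
lemma eval2_numeral[simp]: "eval2 (numeral n) x y = numeral n"
  using eval2_const[of "numeral n" x y] by (simp add: numeral_poly[symmetric])
lemma eval2_polyX[simp]: "eval2 polyX x y = x"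
  by (simp add: eval2_def polyX_def map_poly_pCons)
lemma eval2_polyY[simp]: "eval2 polyY x y = y"
  by (simp add: eval2_def polyY_def map_poly_pCons)

lemma eval2_F3: "eval2 F3 x y = 6 * (x^2 - y^2) * (x^2 + y^2)^2 + 3 * x^5
        - 6 * x^3 * y^2 - 9 * x * y^4 - 2 * x^2 * y^2"
  by (simp add: F3_def)

definition cN1 :: "rat poly poly" where "cN1 = 13 * polyX^2 + 13 * polyY^2 + 6 * polyX"
definition cD1 :: "rat poly poly" where "cD1 = polyX^2 + polyY^2"
definition cN2 :: "rat poly poly" where
  "cN2 = - (6 * polyY * (2 * polyX^2 + 9 * polyX * cD1 + 6 * cD1^2))"
definition cD2 :: "rat poly poly" where "cD2 = polyX * cD1^2"

lemma eval2_cD1: "eval2 cD1 x y = x^2 + y^2" by (simp add: cD1_def)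
lemma eval2_cN1: "eval2 cN1 x y = 13 * x^2 + 13 * y^2 + 6 * x" by (simp add: cN1_def)
lemma eval2_cD2: "eval2 cD2 x y = x * (x^2 + y^2)^2" by (simp add: cD2_def cD1_def)
lemma eval2_cN2: "eval2 cN2 x y = - (6 * y * (2 * x^2 + 9 * x * (x^2 + y^2) + 6 * (x^2 + y^2)^2))"
  by (simp add: cN2_def cD1_def)

lemma F3_alt: "6 * (x^2 - y^2) * (x^2 + y^2)^2 + 3 * x^5 - 6 * x^3 * y^2 - 9 * x * y^4 - 2 * x^2 * y^2
   = 3 * x^2 * (x^2 + y^2) * (x + 2 * (x^2 + y^2)) - y^2 * (2 * x^2 + 9 * x * (x^2 + y^2) + 6 * (x^2 + y^2)^2)"
  for x y :: complex
  by algebra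

lemma E_good:
  fixes u v :: complex
  assumes E: "onE u v" and g: "u^2 + u - 74 \<noteq> 0" and u13: "u \<noteq> 13"
    and K: "(phiX u)^2 + (phiY u v)^2 \<noteq> 0"
  shows "phi_defined u v
                \<and> eval2 F3 (fst (phi u v)) (snd (phi u v)) = 0
                \<and> eval2 cD1 (fst (phi u v)) (snd (phi u v)) \<noteq> 0
                \<and> eval2 cD2 (fst (phi u v)) (snd (phi u v)) \<noteq> 0
                \<and> eval2 cN1 (fst (phi u v)) (snd (phi u v))
                    / eval2 cD1 (fst (phi u v)) (snd (phi u v)) = u
                \<and> eval2 cN2 (fst (phi u v)) (snd (phi u v))
                    / eval2 cD2 (fst (phi u v)) (snd (phi u v)) = v"
proof -
  define X where "X = phiX u"
  define Y where "Y = phiY u v"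
  define KK where "KK = X^2 + Y^2"
  define s where "s = 1 / KK"
  define w where "w = 2 * X^2 + 9 * X + 6"
  have Kn: "KK \<noteq> 0" using K by (simp add: KK_def X_def Y_def)
  have sn: "s \<noteq> 0" using Kn by (simp add: s_def)
  have uX: "u = 6 * X + 13" by (simp add: X_def phiX_def field_simps)
  have gw: "u^2 + u - 74 = 18 * w" unfolding w_def using uX by algebra
  have wn: "w \<noteq> 0" using g gw by simp
  have Xn: "X \<noteq> 0" using u13 uX by auto
  have Yv: "Y = v * X / (6 * w)"
  proof -
    have "Y = v / 2 * ((u - 13) / (u^2 + u - 74))" by (simp add: Y_def phiY_def)
    also have "\<dots> = v / 2 * (6 * X / (18 * w))" using uX gw by simp
    also have "\<dots> = v * X / (6 * w)" using wn by (simp add: field_simps)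
    finally show ?thesis .
  qed
  have fw: "u^3 - 75 * u + 74 = 108 * (X + 2) * w" unfolding w_def using uX by algebra
  have v2: "v^2 = 108 * (X + 2) * w" using E fw by (simp add: onE_def)
  have G: "3 * X^2 * (X + 2) = Y^2 * w"
  proof -
    have "Y^2 * w = v^2 * X^2 / (36 * w)" using wn by (simp add: Yv field_simps power2_eq_square)
    also have "\<dots> = 108 * (X + 2) * w * X^2 / (36 * w)" by (simp add: v2)
    also have "\<dots> = 3 * X^2 * (X + 2)" using wn by (simp add: field_simps)
    finally show ?thesis by simp
  qed
  define x where "x = X * s"
  define y where "y = - Y * s"
  have ph: "phi u v = (x, y)"
    by (simp add: phi_def x_def y_def s_def KK_def X_def Y_def field_simps)
  have xy: "x^2 + y^2 = s"
  proof -
    have "x^2 + y^2 = KK * s^2" by (simp add: x_def y_def KK_def power2_eq_square algebra_simps)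
    also have "\<dots> = s" using Kn by (simp add: s_def power2_eq_square)
    finally show ?thesis .
  qed
  have F: "eval2 F3 x y = 0"
  proof -
    have "eval2 F3 x y = 3 * x^2 * s * (x + 2 * s) - y^2 * (2 * x^2 + 9 * x * s + 6 * s^2)"
      by (subst eval2_F3, subst F3_alt, simp only: xy)
    also have "\<dots> = s^4 * (3 * X^2 * (X + 2) - Y^2 * w)"
      by (simp add: x_def y_def w_def) algebra
    also have "\<dots> = 0" using G by simp
    finally show ?thesis .
  qed
  have d1: "eval2 cD1 x y = s" using xy by (simp add: eval2_cD1)
  have d2: "eval2 cD2 x y = X * s^3" using xy by (simp add: eval2_cD2 x_def power3_eq_cube power2_eq_square)
  have n1: "eval2 cN1 x y / eval2 cD1 x y = u"
  proof -
    have "eval2 cN1 x y = 13 * (x^2 + y^2) + 6 * x" by (simp add: eval2_cN1 algebra_simps)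
    then have "eval2 cN1 x y = 13 * s + 6 * x" by (simp only: xy)
    then show ?thesis using d1 sn uX by (simp add: x_def field_simps)
  qed
  have n2: "eval2 cN2 x y / eval2 cD2 x y = v"
  proof -
    have "eval2 cN2 x y = - (6 * y * (2 * x^2 + 9 * x * s + 6 * s^2))"
      by (subst eval2_cN2, simp only: xy)
    also have "\<dots> = 6 * Y * s^3 * w"
      unfolding y_def x_def w_def by algebra
    finally have "eval2 cN2 x y = 6 * Y * s^3 * w" .
    then have "eval2 cN2 x y / eval2 cD2 x y = 6 * Y * w / X" using d2 sn Xn
      by (simp add: field_simps power3_eq_cube)
    also have "\<dots> = v" using Xn wn by (simp add: Yv field_simps)
    finally show ?thesis .
  qed
  have pd: "phi_defined u v" using g K by (simp add: phi_defined_def)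
  show ?thesis using pd F d1 d2 n1 n2 sn Xn by (simp add: ph)
qed

lemma C_good:
  fixes x y :: complex
  assumes F: "eval2 F3 x y = 0" and nz: "\<not> (x = 0 \<and> y = 0)"
  shows "eval2 cD1 x y \<noteq> 0 \<and> eval2 cD2 x y \<noteq> 0
                \<and> onE (eval2 cN1 x y / eval2 cD1 x y) (eval2 cN2 x y / eval2 cD2 x y)
                \<and> phi_defined (eval2 cN1 x y / eval2 cD1 x y) (eval2 cN2 x y / eval2 cD2 x y)
                \<and> phi (eval2 cN1 x y / eval2 cD1 x y) (eval2 cN2 x y / eval2 cD2 x y) = (x, y)"
proof -
  define s where "s = x^2 + y^2"
  define W where "W = 2 * x^2 + 9 * x * s + 6 * s^2"
  have curve: "3 * x^2 * s * (x + 2 * s) = y^2 * W"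
    using F unfolding eval2_F3 F3_alt s_def W_def by simp
  have F': "6 * (x^2 - y^2) * s^2 + 3 * x * (x^2 - 3 * y^2) * s - 2 * x^2 * y^2 = 0"
    using F unfolding eval2_F3 s_def by (simp add: algebra_simps power2_eq_square power3_eq_cube) algebra
  have sn: "s \<noteq> 0"
  proof
    assume s0: "s = 0"
    then have "x^2 * y^2 = 0" using F' by simp
    then have "x = 0 \<or> y = 0" by simp
    then show False using s0 nz by (auto simp: s_def)
  qed
  have xn: "x \<noteq> 0"
  proof
    assume x0: "x = 0"
    then have "y^6 = 0" using F by (simp add: eval2_F3 power2_eq_square)
    then show False using x0 nz by simp
  qed
  have Wn: "W \<noteq> 0"
  proof
    assume W0: "W = 0"
    then have "x + 2 * s = 0" using curve sn xn by simp
    then have "x = - 2 * s" by algebra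
    then have "W = - 4 * s^2" unfolding W_def by algebra
    then show False using W0 sn by simp
  qed
  define u where "u = eval2 cN1 x y / eval2 cD1 x y"
  define v where "v = eval2 cN2 x y / eval2 cD2 x y"
  have d1: "eval2 cD1 x y = s" by (simp add: eval2_cD1 s_def)
  have d2: "eval2 cD2 x y = x * s^2" by (simp add: eval2_cD2 s_def)
  have u: "u = 6 * (x / s) + 13"
  proof -
    have "eval2 cN1 x y = 13 * s + 6 * x" by (simp add: eval2_cN1 s_def algebra_simps)
    then show ?thesis using sn by (simp add: u_def d1 field_simps)
  qed
  have v: "v = - (6 * y * W) / (x * s^2)"
    by (simp add: v_def d2 eval2_cN2 W_def s_def)
  define X where "X = x / s"
  define Y where "Y = - y / s"
  have pX: "phiX u = X" by (simp add: phiX_def u X_def)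
  have g: "u^2 + u - 74 = 18 * W / s^2"
  proof -
    have "u^2 + u - 74 = 18 * (2 * X^2 + 9 * X + 6)" unfolding u X_def[symmetric] by algebra
    also have "\<dots> = 18 * W / s^2" using sn by (simp add: X_def W_def field_simps power2_eq_square)
    finally show ?thesis .
  qed
  have gn: "u^2 + u - 74 \<noteq> 0" using g sn Wn by simp
  have u13X: "u - 13 = 6 * X" by (simp add: u X_def)
  have pY: "phiY u v = Y"
  proof -
    have "phiY u v = v / 2 * ((u - 13) / (u^2 + u - 74))" by (simp add: phiY_def)
    also have "\<dots> = v / 2 * (6 * X / (18 * W / s^2))" using g u13X by (simp only:)
    also have "\<dots> = Y" using sn Wn xn by (simp add: v X_def Y_def field_simps power2_eq_square)
    finally show ?thesis .
  qed
  have K: "X^2 + Y^2 = 1 / s"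
  proof -
    have "X^2 + Y^2 = (x^2 + y^2) / s^2" by (simp add: X_def Y_def power_divide add_divide_distrib)
    also have "\<dots> = s / s^2" by (simp add: s_def)
    also have "\<dots> = 1 / s" using sn by (simp add: power2_eq_square)
    finally show ?thesis .
  qed
  have pd: "phi_defined u v" using gn K sn by (simp add: phi_defined_def pX pY)
  have ph: "phi u v = (x, y)"
  proof -
    have "phi u v = (X / (X^2 + Y^2), - Y / (X^2 + Y^2))" by (simp add: phi_def pX pY)
    also have "\<dots> = (X / (1 / s), - Y / (1 / s))" by (simp only: K)
    also have "\<dots> = (x, y)" using sn by (simp add: X_def Y_def)
    finally show ?thesis .
  qed
  have E: "onE u v"
  proof -
    have f: "u^3 - 75 * u + 74 = 108 * (X + 2) * (2 * X^2 + 9 * X + 6)" unfolding u X_def[symmetric] by algebra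
    also have "\<dots> = 108 * (x + 2 * s) * W / s^3" using sn
      by (simp add: X_def W_def field_simps power2_eq_square power3_eq_cube)
    finally have f2: "u^3 - 75 * u + 74 = 108 * (x + 2 * s) * W / s^3" .
    have "v^2 = 36 * y^2 * W^2 / (x^2 * s^4)" by (simp add: v power_mult_distrib power_divide)
    also have "\<dots> = 36 * W * (y^2 * W) / (x^2 * s^4)" by (simp add: power2_eq_square algebra_simps)
    also have "\<dots> = 36 * W * (3 * x^2 * s * (x + 2 * s)) / (x^2 * s^4)" by (simp only: curve)
    also have "\<dots> = 108 * (x + 2 * s) * W / s^3" using sn xn
      by (simp add: field_simps power2_eq_square power3_eq_cube) algebra
    finally show ?thesis using f2 by (simp add: onE_def)
  qed
  have "eval2 cD1 x y \<noteq> 0" "eval2 cD2 x y \<noteq> 0" using d1 d2 sn xn by auto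
  then show ?thesis using E pd ph unfolding u_def v_def by blast
qed

lemma E_G:
  fixes u v :: complex
  assumes E: "onE u v" and g: "u^2 + u - 74 \<noteq> 0"
  shows "(phiY u v)^2 * (2 * (phiX u)^2 + 9 * phiX u + 6) = 3 * (phiX u)^2 * (phiX u + 2)"
proof -
  define X where "X = phiX u"
  define Y where "Y = phiY u v"
  define w where "w = 2 * X^2 + 9 * X + 6"
  have uX: "u = 6 * X + 13" by (simp add: X_def phiX_def field_simps)
  have gw: "u^2 + u - 74 = 18 * w" unfolding w_def using uX by algebra
  have wn: "w \<noteq> 0" using g gw by simp
  have Yv: "Y = v * X / (6 * w)"
  proof -
    have "Y = v / 2 * ((u - 13) / (u^2 + u - 74))" by (simp add: Y_def phiY_def)
    also have "\<dots> = v / 2 * (6 * X / (18 * w))" using uX gw by simp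
    also have "\<dots> = v * X / (6 * w)" using wn by (simp add: field_simps)
    finally show ?thesis .
  qed
  have fw: "u^3 - 75 * u + 74 = 108 * (X + 2) * w" unfolding w_def using uX by algebra
  have v2: "v^2 = 108 * (X + 2) * w" using E fw by (simp add: onE_def)
  have "Y^2 * w = v^2 * X^2 / (36 * w)" using wn by (simp add: Yv field_simps power2_eq_square)
  also have "\<dots> = 108 * (X + 2) * w * X^2 / (36 * w)" by (simp add: v2)
  also have "\<dots> = 3 * X^2 * (X + 2)" using wn by (simp add: field_simps)
  finally show ?thesis by (simp add: X_def Y_def w_def)
qed

lemma K_zero:
  fixes u v :: complex
  assumes E: "onE u v" and g: "u^2 + u - 74 \<noteq> 0" and u13: "u \<noteq> 13"
    and K: "(phiX u)^2 + (phiY u v)^2 = 0"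
  shows "u^2 + 10 * u - 83 = 0"
proof -
  define X where "X = phiX u"
  define Y where "Y = phiY u v"
  have uX: "u = 6 * X + 13" by (simp add: X_def phiX_def field_simps)
  have Xn: "X \<noteq> 0" using u13 uX by auto
  have G: "Y^2 * (2 * X^2 + 9 * X + 6) = 3 * X^2 * (X + 2)" using E_G[OF E g] by (simp add: X_def Y_def)
  have K': "X^2 + Y^2 = 0" using K by (simp add: X_def Y_def)
  have "X^2 * (2 * X^2 + 12 * X + 12) = 0" using G K' by algebra
  then have "2 * X^2 + 12 * X + 12 = 0" using Xn by simp
  then show ?thesis using uX by algebra
qed

lemma finite_curve_pts:
  fixes P :: "complex poly" and f :: "complex \<Rightarrow> complex"
  assumes "P \<noteq> 0"
  shows "finite {(u, v). poly P u = 0 \<and> v^2 = f u}"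
proof -
  have "{(u, v). poly P u = 0 \<and> v^2 = f u} \<subseteq>
      (\<Union>u\<in>{u. poly P u = 0}. {u} \<times> {v. poly [:- f u, 0, 1:] v = 0})"
    by (auto simp: power2_eq_square)
  moreover have "finite (\<Union>u\<in>{u. poly P u = 0}. {u} \<times> {v. poly [:- f u, 0, 1:] v = 0})"
    using assms by (intro finite_UN_I poly_roots_finite finite_cartesian_product) auto
  ultimately show ?thesis using finite_subset by blast
qed

theorem part3:
  "\<exists>N1 D1 N2 D2 :: rat poly poly.
         finite {(u, v). onE u v \<and>
            \<not> (phi_defined u v
                \<and> eval2 F3 (fst (phi u v)) (snd (phi u v)) = 0
                \<and> eval2 D1 (fst (phi u v)) (snd (phi u v)) \<noteq> 0
                \<and> eval2 D2 (fst (phi u v)) (snd (phi u v)) \<noteq> 0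
                \<and> eval2 N1 (fst (phi u v)) (snd (phi u v))
                    / eval2 D1 (fst (phi u v)) (snd (phi u v)) = u
                \<and> eval2 N2 (fst (phi u v)) (snd (phi u v))
                    / eval2 D2 (fst (phi u v)) (snd (phi u v)) = v)}
       \<and> finite {(x, y). eval2 F3 x y = 0 \<and>
            \<not> (eval2 D1 x y \<noteq> 0 \<and> eval2 D2 x y \<noteq> 0
                \<and> onE (eval2 N1 x y / eval2 D1 x y) (eval2 N2 x y / eval2 D2 x y)
                \<and> phi_defined (eval2 N1 x y / eval2 D1 x y) (eval2 N2 x y / eval2 D2 x y)
                \<and> phi (eval2 N1 x y / eval2 D1 x y) (eval2 N2 x y / eval2 D2 x y) = (x, y))}"
proof (rule exI[where x=cN1], rule exI[where x=cD1], rule exI[where x=cN2], rule exI[where x=cD2], rule conjI)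
  define P :: "complex poly" where "P = [:-74, 1, 1:] * [:-13, 1:] * [:-83, 10, 1:]"
  have Pnz: "P \<noteq> 0" by (simp add: P_def)
  have PP: "poly P u = 0 \<longleftrightarrow> u^2 + u - 74 = 0 \<or> u = 13 \<or> u^2 + 10 * u - 83 = 0" for u
  proof -
    have "poly P u = (u^2 + u - 74) * (u - 13) * (u^2 + 10 * u - 83)"
      by (simp add: P_def power2_eq_square algebra_simps)
    then show ?thesis by simp
  qed
  show "finite {(u, v). onE u v \<and>
            \<not> (phi_defined u v
                \<and> eval2 F3 (fst (phi u v)) (snd (phi u v)) = 0
                \<and> eval2 cD1 (fst (phi u v)) (snd (phi u v)) \<noteq> 0
                \<and> eval2 cD2 (fst (phi u v)) (snd (phi u v)) \<noteq> 0
                \<and> eval2 cN1 (fst (phi u v)) (snd (phi u v))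
                    / eval2 cD1 (fst (phi u v)) (snd (phi u v)) = u
                \<and> eval2 cN2 (fst (phi u v)) (snd (phi u v))
                    / eval2 cD2 (fst (phi u v)) (snd (phi u v)) = v)}" (is "finite ?S")
  proof (rule finite_subset[OF _ finite_curve_pts[OF Pnz, of "\<lambda>u. u^3 - 75 * u + 74"]])
    show "?S \<subseteq> {(u, v). poly P u = 0 \<and> v^2 = u^3 - 75 * u + 74}"
    proof clarify
      fix u v assume E: "onE u v" and bad: "\<not> (phi_defined u v
                \<and> eval2 F3 (fst (phi u v)) (snd (phi u v)) = 0
                \<and> eval2 cD1 (fst (phi u v)) (snd (phi u v)) \<noteq> 0
                \<and> eval2 cD2 (fst (phi u v)) (snd (phi u v)) \<noteq> 0
                \<and> eval2 cN1 (fst (phi u v)) (snd (phi u v))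
                    / eval2 cD1 (fst (phi u v)) (snd (phi u v)) = u
                \<and> eval2 cN2 (fst (phi u v)) (snd (phi u v))
                    / eval2 cD2 (fst (phi u v)) (snd (phi u v)) = v)"
      have "poly P u = 0"
      proof (cases "u^2 + u - 74 = 0 \<or> u = 13")
        case True then show ?thesis using PP by blast
      next
        case False
        then have g: "u^2 + u - 74 \<noteq> 0" and u13: "u \<noteq> 13" by auto
        have "(phiX u)^2 + (phiY u v)^2 = 0" using E_good[OF E g u13] bad by blast
        then show ?thesis using K_zero[OF E g u13] PP by blast
      qed
      then show "poly P u = 0 \<and> v^2 = u^3 - 75 * u + 74" using E by (simp add: onE_def)
    qed
  qed
  show "finite {(x, y). eval2 F3 x y = 0 \<and>
            \<not> (eval2 cD1 x y \<noteq> 0 \<and> eval2 cD2 x y \<noteq> 0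
                \<and> onE (eval2 cN1 x y / eval2 cD1 x y) (eval2 cN2 x y / eval2 cD2 x y)
                \<and> phi_defined (eval2 cN1 x y / eval2 cD1 x y) (eval2 cN2 x y / eval2 cD2 x y)
                \<and> phi (eval2 cN1 x y / eval2 cD1 x y) (eval2 cN2 x y / eval2 cD2 x y) = (x, y))}"
    (is "finite ?T")
  proof (rule finite_subset)
    show "?T \<subseteq> {(0, 0)}" using C_good by auto
  qed simp
qed


theorem mainTheorem1:
  shows "irreducible F3
    \<and> weierstrass_disc (-75) 74 \<noteq> 0
    \<and> (\<exists>N1 D1 N2 D2 :: rat poly poly.
         finite {(u, v). onE u v \<and>
            \<not> (phi_defined u v
                \<and> eval2 F3 (fst (phi u v)) (snd (phi u v)) = 0
                \<and> eval2 D1 (fst (phi u v)) (snd (phi u v)) \<noteq> 0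
                \<and> eval2 D2 (fst (phi u v)) (snd (phi u v)) \<noteq> 0
                \<and> eval2 N1 (fst (phi u v)) (snd (phi u v))
                    / eval2 D1 (fst (phi u v)) (snd (phi u v)) = u
                \<and> eval2 N2 (fst (phi u v)) (snd (phi u v))
                    / eval2 D2 (fst (phi u v)) (snd (phi u v)) = v)}
       \<and> finite {(x, y). eval2 F3 x y = 0 \<and>
            \<not> (eval2 D1 x y \<noteq> 0 \<and> eval2 D2 x y \<noteq> 0
                \<and> onE (eval2 N1 x y / eval2 D1 x y) (eval2 N2 x y / eval2 D2 x y)
                \<and> phi_defined (eval2 N1 x y / eval2 D1 x y) (eval2 N2 x y / eval2 D2 x y)
                \<and> phi (eval2 N1 x y / eval2 D1 x y) (eval2 N2 x y / eval2 D2 x y) = (x, y))})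
    \<and> eval2 F3 (- 1 / 2) 0 = 0
    \<and> weierstrass_j (-75) 74 = 62500 / 33"
proof -
  have a: "weierstrass_disc (-75) 74 \<noteq> 0" by (simp add: weierstrass_disc_def)
  have b: "eval2 F3 (- 1 / 2) 0 = 0" by (simp add: eval2_F3 power_divide)
  have c: "weierstrass_j (-75) 74 = 62500 / 33" by (simp add: weierstrass_j_def)
  show ?thesis using F3_irreducible a part3 b c by blast
qed

end
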